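(* Let $R=\mathbb C[x,y,z,w]$ and $I=\langle x,z,w\rangle\cap\langle x,y\rangle$. There is no collection $\Lambda=(\ell_1,\ldots,\ell_n)$ of linear forms in $R$ together with an integer $a\in\{1,\ldots,n\}$ satisfying $n-a+1=3$ and $\sqrt{I_a(\Lambda)}=I$.
   Context: For a collection $\Lambda=(\ell_1,\ldots,\ell_n)$ of linear forms (possibly some proportional) and $1\le a\le n$, $I_a(\Lambda)$ is the ideal generated by all products $\ell_{i_1}\cdots\ell_{i_a}$ with $1\le i_1<\cdots<i_a\le n$. *)

theory Defs
  imports Complex_Main "HOL-Computational_Algebra.Polynomial"
begin

text \<open>The ring R = C[x,y,z,w], realised as iterated univariate polynomials
  C[x][y][z][w]; x is the innermost variable, w the outermost.\<close>
type_synonym R = "complex poly poly poly poly"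

definition cst :: "complex \<Rightarrow> R" where
  "cst c = [:[:[:[:c:]:]:]:]"

definition var_x :: R where "var_x = [:[:[:[:0, 1:]:]:]:]"
definition var_y :: R where "var_y = [:[:[:0, 1:]:]:]"
definition var_z :: R where "var_z = [:[:0, 1:]:]"
definition var_w :: R where "var_w = [:0, 1:]"

definition is_linear_form :: "R \<Rightarrow> bool" where
  "is_linear_form l \<longleftrightarrow> (\<exists>a b c d. l = cst a * var_x + cst b * var_y + cst c * var_z + cst d * var_w)"

definition gen_ideal :: "'a::comm_ring_1 set \<Rightarrow> 'a set" where
  "gen_ideal S = {(\<Sum>s\<in>F. c s * s) | F c. finite F \<and> F \<subseteq> S}"

definition radical :: "'a::comm_ring_1 set \<Rightarrow> 'a set" where
  "radical J = {f. \<exists>k. f ^ k \<in> J}"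

definition I_a :: "nat \<Rightarrow> 'a::comm_ring_1 list \<Rightarrow> 'a set" where
  "I_a a L = gen_ideal {(\<Prod>i\<in>S. L ! i) | S. S \<subseteq> {..<length L} \<and> card S = a}"

end

theory Submission
  imports Defs
begin

definition ev :: "R \<Rightarrow> complex \<Rightarrow> complex \<Rightarrow> complex \<Rightarrow> complex \<Rightarrow> complex" where
  "ev p a b c d = poly (poly (poly (poly p [:[:[:d:]:]:]) [:[:c:]:]) [:b:]) a"

lemma ev_add[simp]: "ev (p + q) a b c d = ev p a b c d + ev q a b c d"
  by (simp add: ev_def)
lemma ev_mult[simp]: "ev (p * q) a b c d = ev p a b c d * ev q a b c d"
  by (simp add: ev_def)
lemma ev_power[simp]: "ev (p ^ k) a b c d = ev p a b c d ^ k"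
  by (simp add: ev_def)
lemma ev_sum: "ev (\<Sum>s\<in>F. f s) a b c d = (\<Sum>s\<in>F. ev (f s) a b c d)"
  by (simp add: ev_def poly_sum)
lemma ev_prod: "ev (\<Prod>s\<in>F. f s) a b c d = (\<Prod>s\<in>F. ev (f s) a b c d)"
  by (simp add: ev_def poly_prod)
lemma ev_cst[simp]: "ev (cst e) a b c d = e" by (simp add: ev_def cst_def)
lemma ev_x[simp]: "ev var_x a b c d = a" by (simp add: ev_def var_x_def)
lemma ev_y[simp]: "ev var_y a b c d = b" by (simp add: ev_def var_y_def)
lemma ev_z[simp]: "ev var_z a b c d = c" by (simp add: ev_def var_z_def)
lemma ev_w[simp]: "ev var_w a b c d = d" by (simp add: ev_def var_w_def)

lemma gen_ideal_vanish:
  assumes "f \<in> gen_ideal S" "\<forall>s\<in>S. ev s a b c d = 0"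
  shows "ev f a b c d = 0"
proof -
  obtain F g where "f = (\<Sum>s\<in>F. g s * s)" "F \<subseteq> S" using assms(1) unfolding gen_ideal_def by blast
  then show ?thesis using assms(2) by (auto simp: ev_sum intro!: sum.neutral)
qed

lemma gen_ideal_mem:
  assumes "s \<in> S" shows "g * s \<in> gen_ideal S"
  unfolding gen_ideal_def
  by (rule CollectI, rule exI[of _ "{s}"], rule exI[of _ "\<lambda>_. g"]) (use assms in auto)

lemma gen_ideal_mem1:
  assumes "s \<in> S" shows "s \<in> gen_ideal (S::'a::comm_ring_1 set)"
  using gen_ideal_mem[OF assms, of 1] by simp

theorem mainTheorem6:
  shows "\<not> (\<exists>(L :: R list) (a :: nat).
            (\<forall>l\<in>set L. is_linear_form l) \<and> 1 \<le> a \<and> a \<le> length L \<and>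
            length L - a + 1 = 3 \<and>
            radical (I_a a L) = gen_ideal {var_x, var_z, var_w} \<inter> gen_ideal {var_x, var_y})"
proof
  assume "\<exists>(L :: R list) (a :: nat).
            (\<forall>l\<in>set L. is_linear_form l) \<and> 1 \<le> a \<and> a \<le> length L \<and>
            length L - a + 1 = 3 \<and>
            radical (I_a a L) = gen_ideal {var_x, var_z, var_w} \<inter> gen_ideal {var_x, var_y}"
  then obtain L :: "R list" and a :: nat where lin: "\<forall>l\<in>set L. is_linear_form l"
    and a1: "1 \<le> a" and aL: "a \<le> length L" and n3: "length L - a + 1 = 3"
    and rad: "radical (I_a a L) = gen_ideal {var_x, var_z, var_w} \<inter> gen_ideal {var_x, var_y}"
    by blast
  define n where "n = length L"
  have na: "n = a + 2" using aL n3 unfolding n_def by linarith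
  define lf :: "complex \<times> complex \<times> complex \<times> complex \<Rightarrow> R" where
    "lf t = cst (fst t) * var_x + cst (fst (snd t)) * var_y + cst (fst (snd (snd t))) * var_z
            + cst (snd (snd (snd t))) * var_w" for t
  have "\<forall>i. \<exists>t. i < n \<longrightarrow> L ! i = lf t"
  proof
    fix i
    show "\<exists>t. i < n \<longrightarrow> L ! i = lf t"
    proof (cases "i < n")
      case True
      then have "is_linear_form (L ! i)" using lin n_def by auto
      then obtain p q r u where "L ! i = cst p * var_x + cst q * var_y + cst r * var_z + cst u * var_w"
        unfolding is_linear_form_def by blast
      then have "L ! i = lf (p, q, r, u)" by (simp add: lf_def)
      then show ?thesis by blast
    qed auto
  qed
  then obtain f where f: "\<forall>i. i < n \<longrightarrow> L ! i = lf (f i)" by (metis choice)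
  define al where "al i = fst (f i)" for i
  define be where "be i = fst (snd (f i))" for i
  define ga where "ga i = fst (snd (snd (f i)))" for i
  define de where "de i = snd (snd (snd (f i)))" for i
  have val: "ev (L ! i) p1 p2 p3 p4 = al i * p1 + be i * p2 + ga i * p3 + de i * p4"
    if "i < n" for i p1 p2 p3 p4
    using f that by (simp add: lf_def al_def be_def ga_def de_def)
  define Z where "Z p1 p2 p3 p4 = {i. i < n \<and> ev (L ! i) p1 p2 p3 p4 = 0}" for p1 p2 p3 p4
  have Zfin: "finite (Z p1 p2 p3 p4)" for p1 p2 p3 p4 unfolding Z_def by auto
  have Zsub: "Z p1 p2 p3 p4 \<subseteq> {..<n}" for p1 p2 p3 p4 unfolding Z_def by auto
  have K1: "p1 = 0 \<and> p2 * p3 = 0 \<and> p2 * p4 = 0" if c3: "3 \<le> card (Z p1 p2 p3 p4)" for p1 p2 p3 p4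
  proof -
    have Ia: "ev g p1 p2 p3 p4 = 0" if "g \<in> I_a a L" for g
    proof -
      have "ev s p1 p2 p3 p4 = 0" if "s \<in> {(\<Prod>i\<in>S. L ! i) | S. S \<subseteq> {..<length L} \<and> card S = a}" for s
      proof -
        obtain S where S: "s = (\<Prod>i\<in>S. L ! i)" "S \<subseteq> {..<n}" "card S = a"
          using \<open>s \<in> _\<close> n_def by blast
        have "S \<inter> Z p1 p2 p3 p4 \<noteq> {}"
        proof
          assume "S \<inter> Z p1 p2 p3 p4 = {}"
          then have "S \<subseteq> {..<n} - Z p1 p2 p3 p4" using S by auto
          then have "card S \<le> card ({..<n} - Z p1 p2 p3 p4)" by (intro card_mono) auto
          also have "\<dots> = n - card (Z p1 p2 p3 p4)" using Zsub Zfin by (simp add: card_Diff_subset)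
          finally show False using S c3 na a1 by linarith
        qed
        then obtain i where "i \<in> S" "ev (L ! i) p1 p2 p3 p4 = 0" unfolding Z_def by auto
        moreover have "finite S" using S(2) finite_subset by blast
        ultimately show ?thesis using S(1) by (auto simp: ev_prod intro!: prod_zero)
      qed
      then show ?thesis using that unfolding I_a_def by (intro gen_ideal_vanish) auto
    qed
    have R: "ev g p1 p2 p3 p4 = 0" if gr: "g \<in> radical (I_a a L)" for g
    proof -
      obtain k where "g ^ k \<in> I_a a L" using gr unfolding radical_def by blast
      then have "ev g p1 p2 p3 p4 ^ k = 0" using Ia by (metis ev_power)
      then show ?thesis by simp
    qed
    have "var_x \<in> radical (I_a a L)" unfolding rad by (auto intro: gen_ideal_mem1)
    moreover have "var_y * var_z \<in> radical (I_a a L)" unfolding rad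
      using gen_ideal_mem[of var_z "{var_x, var_z, var_w}" var_y]
        gen_ideal_mem[of var_y "{var_x, var_y}" var_z] by (simp add: mult.commute)
    moreover have "var_y * var_w \<in> radical (I_a a L)" unfolding rad
      using gen_ideal_mem[of var_w "{var_x, var_z, var_w}" var_y]
        gen_ideal_mem[of var_y "{var_x, var_y}" var_w] by (simp add: mult.commute)
    ultimately show ?thesis using R by (metis ev_x ev_y ev_z ev_w ev_mult)
  qed
  have K2: "3 \<le> card (Z p1 p2 p3 p4)" if "p1 = 0" "p2 = 0 \<or> (p3 = 0 \<and> p4 = 0)" for p1 p2 p3 p4
  proof (rule ccontr)
    assume "\<not> 3 \<le> card (Z p1 p2 p3 p4)"
    then have "card ({..<n} - Z p1 p2 p3 p4) \<ge> a" using Zsub Zfin na by (simp add: card_Diff_subset)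
    then obtain S where S: "S \<subseteq> {..<n} - Z p1 p2 p3 p4" "card S = a"
      by (meson obtain_subset_with_card_n)
    have "finite S" using S(1) finite_subset by blast
    have "(\<Prod>i\<in>S. L ! i) \<in> I_a a L" unfolding I_a_def
      by (rule gen_ideal_mem1) (use S n_def in auto)
    then have "(\<Prod>i\<in>S. L ! i) \<in> radical (I_a a L)" unfolding radical_def
      by (intro CollectI exI[of _ 1]) simp
    then have mem: "(\<Prod>i\<in>S. L ! i) \<in> gen_ideal {var_x, var_z, var_w} \<inter> gen_ideal {var_x, var_y}"
      using rad by simp
    have "ev (\<Prod>i\<in>S. L ! i) p1 p2 p3 p4 = 0"
      using that(2)
    proof
      assume "p2 = 0" then show ?thesis using mem that(1) by (intro gen_ideal_vanish[of _ "{var_x, var_y}"]) auto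
    next
      assume "p3 = 0 \<and> p4 = 0" then show ?thesis using mem that(1)
        by (intro gen_ideal_vanish[of _ "{var_x, var_z, var_w}"]) auto
    qed
    moreover have "ev (\<Prod>i\<in>S. L ! i) p1 p2 p3 p4 \<noteq> 0"
      using S(1) \<open>finite S\<close> by (auto simp: ev_prod Z_def)
    ultimately show False by simp
  qed
  define A where "A = {i. i < n \<and> ga i = 0 \<and> de i = 0}"
  have "finite {t. \<exists>i<n. (ga i \<noteq> 0 \<or> de i \<noteq> 0) \<and> ga i + de i * t = 0}"
  proof (rule finite_subset)
    show "{t. \<exists>i<n. (ga i \<noteq> 0 \<or> de i \<noteq> 0) \<and> ga i + de i * t = 0} \<subseteq> (\<lambda>i. - ga i / de i) ` {..<n}"
    proof
      fix t assume "t \<in> {t. \<exists>i<n. (ga i \<noteq> 0 \<or> de i \<noteq> 0) \<and> ga i + de i * t = 0}"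
      then obtain i where i: "i < n" "ga i \<noteq> 0 \<or> de i \<noteq> 0" "ga i + de i * t = 0" by blast
      then have "de i \<noteq> 0" by auto
      then have "t = - ga i / de i" using i(3) by (simp add: field_simps) (metis add.commute add_eq_0_iff2 mult.commute)
      then show "t \<in> (\<lambda>i. - ga i / de i) ` {..<n}" using i(1) by auto
    qed
  qed auto
  then obtain t where t: "t \<notin> {t. \<exists>i<n. (ga i \<noteq> 0 \<or> de i \<noteq> 0) \<and> ga i + de i * t = 0}"
    using ex_new_if_finite[OF infinite_UNIV_char_0] by blast
  have "Z 0 0 1 t \<subseteq> A"
    using t by (auto simp: Z_def A_def val)
  moreover have "3 \<le> card (Z 0 0 1 t)" by (rule K2) auto
  moreover have "finite A" unfolding A_def by auto
  ultimately have cA: "3 \<le> card A" by (meson card_mono le_trans)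
  obtain s where s: "s \<in> A" "be s \<noteq> 0"
  proof (rule ccontr)
    assume "\<not> thesis"
    with that have "\<forall>i\<in>A. be i = 0" by blast
    then have "A \<subseteq> Z 0 1 1 0" by (auto simp: Z_def A_def val)
    then have "3 \<le> card (Z 0 1 1 0)" using cA Zfin by (meson card_mono le_trans)
    then show False using K1 by force
  qed
  define B where "B = Z 0 1 0 0"
  have cB: "3 \<le> card B" unfolding B_def by (rule K2) auto
  have Bbe: "i \<in> B \<Longrightarrow> i < n \<and> be i = 0" for i by (auto simp: B_def Z_def val)
  show False
  proof (cases "\<exists>i\<in>B. \<exists>j\<in>B. ga i * de j - de i * ga j \<noteq> 0")
    case True
    then obtain i j where ij: "i \<in> B" "j \<in> B" "ga i * de j - de i * ga j \<noteq> 0" by blast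
    define D where "D = ga i * de j - de i * ga j"
    define p2 where "p2 = - al s * D / be s"
    define p3 where "p3 = de i * al j - al i * de j"
    define p4 where "p4 = al i * ga j - ga i * al j"
    have sn: "s < n" "ga s = 0" "de s = 0" using s unfolding A_def by auto
    have "{s, i, j} \<subseteq> Z D p2 p3 p4"
      using ij Bbe[of i] Bbe[of j] sn s(2)
      by (auto simp: Z_def val p2_def p3_def p4_def D_def field_simps)
    moreover have "card {s, i, j} = 3"
    proof -
      have "i \<noteq> j" using ij(3) by auto
      moreover have "s \<noteq> i" "s \<noteq> j" using Bbe[OF ij(1)] Bbe[OF ij(2)] s(2) by auto
      ultimately show ?thesis by simp
    qed
    ultimately have "3 \<le> card (Z D p2 p3 p4)" using Zfin by (metis card_mono)
    then have "D = 0" using K1 by blast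
    then show False using ij(3) D_def by simp
  next
    case False
    obtain c3 c4 where c: "c3 \<noteq> 0 \<or> c4 \<noteq> 0" "\<forall>i\<in>B. ga i * c3 + de i * c4 = 0"
    proof (cases "\<exists>i0\<in>B. ga i0 \<noteq> 0 \<or> de i0 \<noteq> 0")
      case True
      then obtain i0 where "i0 \<in> B" "ga i0 \<noteq> 0 \<or> de i0 \<noteq> 0" by blast
      then show ?thesis using False by (intro that[of "de i0" "- ga i0"]) (auto simp: algebra_simps)
    next
      case False
      then show ?thesis by (intro that[of 1 0]) auto
    qed
    have "B \<subseteq> Z 0 1 c3 c4" using c(2) Bbe by (auto simp: Z_def val)
    then have "3 \<le> card (Z 0 1 c3 c4)" using cB Zfin by (meson card_mono le_trans)
    then show False using K1 c(1) by force
  qed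
qed

end
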